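(* Fix $k\ge2$ and let $\mathbf{P}:(\mathbb{Z}/2\mathbb{Z})^k\to\mathbb{R}[x]$. Define $\mathbf{Q}:(\mathbb{Z}/2\mathbb{Z})^{k-1}\to\mathbb{R}[x]$ by $Q_{1\alpha}=P_{01\alpha}+P_{10\alpha}$ and $Q_{0\alpha}=P_{00\alpha}+xP_{11\alpha}$ for all $\alpha\in(\mathbb{Z}/2\mathbb{Z})^{k-2}$. Assume: - there is $\beta\in(\mathbb{Z}/2\mathbb{Z})^{k-2}$ with $P_{00\beta}\not\equiv0$ or $P_{11\beta}\not\equiv0$; - there is $\gamma\in(\mathbb{Z}/2\mathbb{Z})^{k-2}$ with $P_{01\gamma}\not\equiv0$ or $P_{10\gamma}\not\equiv0$. If $\mathbf{P}$ is an interpolatory $k$-cube, then $\mathbf{Q}$ is an interpolatory $(k-1)$-cube.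
   Context: Elements of $(\mathbb{Z}/2\mathbb{Z})^k$ are strings $\alpha=\alpha_1\cdots\alpha_k$, and $\eta(i)$ has a single $1$ in coordinate $i$. Interpolation operators. For $\lambda,\rho\ge0$, ${}_1\mathrm{I}^\rho_\lambda$ maps $\mathbf{P}:(\mathbb{Z}/2\mathbb{Z})^k\to\mathbb{R}[x]$ to $\mathbf{Q}:(\mathbb{Z}/2\mathbb{Z})^{k-1}\to\mathbb{R}[x]$ with $Q_\alpha=\lambda P_{1\alpha}+\rho P_{0\alpha}$. For $k$-tuples $\lambda,\rho$ of nonnegative reals, $\mathbb{I}^\rho_\lambda={}_1\mathrm{I}^{\rho_k}_{\lambda_k}\cdots{}_1\mathrm{I}^{\rho_1}_{\lambda_1}$, which yields a single polynomial. Flip operators. $(\Phi_i\mathbf{P})_\alpha=xP_{\alpha+\eta(i)}$ if $\alpha_i=0$, and $=P_{\alpha+\eta(i)}$ if $\alpha_i=1$. $\Phi_S=\prod_{i\in S}\Phi_i$. Interpolatory $k$-cubes. $\mathbf{P}$ is an interpolatory $k$-cube if, for all $k$-tuples $\lambda,\rho$ of positive reals and all $S\subseteq\{1,\ldots,k\}$, $\mathbb{I}^\rho_\lambda\Phi_S\mathbf{P}$ is standard (i.e. $\equiv0$ or has positive leading coefficient) and has only nonpositive zeros (i.e. is $\equiv0$ or has all zeros real and $\le0$). *)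

theory Defs
  imports "HOL-Computational_Algebra.Polynomial" Complex_Main
begin

text \<open>Elements of (Z/2Z)^k are bool lists of length k (True = 1, first list
entry = coordinate 1). A map (Z/2Z)^k -> R[x] is a function on bool lists;
only its values on lists of length k matter.\<close>

type_synonym cube = "bool list \<Rightarrow> real poly"

definition interp1 :: "real \<Rightarrow> real \<Rightarrow> cube \<Rightarrow> cube" where
  "interp1 lam rho P = (\<lambda>\<alpha>. smult lam (P (True # \<alpha>)) + smult rho (P (False # \<alpha>)))"

text \<open>Iterated interpolation I_k ... I_1 (I_1 applied first), yielding P [].\<close>
fun interp :: "real list \<Rightarrow> real list \<Rightarrow> cube \<Rightarrow> real poly" where
  "interp (l # ls) (r # rs) P = interp ls rs (interp1 l r P)"
| "interp _ _ P = P []"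

text \<open>Flip operator Phi_i (0-based index i, i.e. coordinate i+1).\<close>
definition flip :: "nat \<Rightarrow> cube \<Rightarrow> cube" where
  "flip i P = (\<lambda>\<alpha>. if \<alpha> ! i then P (\<alpha>[i := False])
                   else [:0, 1:] * P (\<alpha>[i := True]))"

definition flipS :: "nat set \<Rightarrow> cube \<Rightarrow> cube" where
  "flipS S P = fold flip (sorted_list_of_set S) P"

definition standard :: "real poly \<Rightarrow> bool" where
  "standard p \<longleftrightarrow> p = 0 \<or> lead_coeff p > 0"

definition nonpos_zeros :: "real poly \<Rightarrow> bool" where
  "nonpos_zeros p \<longleftrightarrow> p = 0 \<or>
     (\<forall>z::complex. poly (map_poly of_real p) z = 0 \<longrightarrow> z \<in> \<real> \<and> Re z \<le> 0)"

definition interpolatory_cube :: "nat \<Rightarrow> cube \<Rightarrow> bool" where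
  "interpolatory_cube k P \<longleftrightarrow>
     (\<forall>lam rho S. length lam = k \<and> length rho = k \<and> (\<forall>a\<in>set lam. a > 0)
        \<and> (\<forall>a\<in>set rho. a > 0) \<and> S \<subseteq> {0..<k} \<longrightarrow>
        standard (interp lam rho (flipS S P)) \<and> nonpos_zeros (interp lam rho (flipS S P)))"

text \<open>The cube Q built from P (values on lists of length < 1 are irrelevant).\<close>
fun contractQ :: "cube \<Rightarrow> cube" where
  "contractQ P (True # \<alpha>) = P (False # True # \<alpha>) + P (True # False # \<alpha>)"
| "contractQ P (False # \<alpha>) = P (False # False # \<alpha>) + [:0, 1:] * P (True # True # \<alpha>)"
| "contractQ P [] = 0"

end

theory Submission
  imports Defs "HOL-Complex_Analysis.Complex_Analysis" "HOL-Computational_Algebra.Fundamental_Theorem_Algebra"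
begin

definition slice :: "cube \<Rightarrow> bool \<Rightarrow> cube" where
  "slice C b = (\<lambda>\<alpha>. C (b # \<alpha>))"

lemma interp_lin:
  "interp ls rs (\<lambda>\<alpha>. c * A \<alpha> + d * B \<alpha>) = c * interp ls rs A + d * interp ls rs B"
proof (induction ls rs "\<lambda>\<alpha>. c * A \<alpha> + d * B \<alpha>" arbitrary: A B rule: interp.induct)
  case (1 l ls r rs)
  have "interp1 l r (\<lambda>\<alpha>. c * A \<alpha> + d * B \<alpha>) = (\<lambda>\<alpha>. c * interp1 l r A \<alpha> + d * interp1 l r B \<alpha>)"
    by (auto simp: interp1_def algebra_simps fun_eq_iff smult_add_right)
  then show ?case using 1 by simp
qed auto

lemma interp_slin:
  "interp ls rs (\<lambda>\<alpha>. smult c (A \<alpha>) + smult d (B \<alpha>)) = smult c (interp ls rs A) + smult d (interp ls rs B)"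
proof (induction ls rs "\<lambda>\<alpha>. smult c (A \<alpha>) + smult d (B \<alpha>)" arbitrary: A B rule: interp.induct)
  case (1 l ls r rs)
  have "interp1 l r (\<lambda>\<alpha>. smult c (A \<alpha>) + smult d (B \<alpha>)) = (\<lambda>\<alpha>. smult c (interp1 l r A \<alpha>) + smult d (interp1 l r B \<alpha>))"
    by (auto simp: interp1_def algebra_simps fun_eq_iff smult_add_right)
  then show ?case using 1 by simp
qed auto

lemma interp_plus:
  "interp ls rs (\<lambda>\<alpha>. A \<alpha> + B \<alpha>) = interp ls rs A + interp ls rs B"
  using interp_lin[of ls rs 1 A 1 B] by simp

lemma interp_mult:
  "interp ls rs (\<lambda>\<alpha>. c * A \<alpha>) = c * interp ls rs A"
  using interp_lin[of ls rs c A 0 A] by simp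

lemma interp_cons:
  "interp (l # ls) (r # rs) C =
     smult l (interp ls rs (slice C True)) + smult r (interp ls rs (slice C False))"
proof -
  have "interp1 l r C = (\<lambda>\<alpha>. smult l (slice C True \<alpha>) + smult r (slice C False \<alpha>))"
    by (auto simp: interp1_def slice_def fun_eq_iff)
  then show ?thesis by (simp add: interp_slin)
qed

lemma flip_comm: "flip i (flip j C) = flip j (flip i C)"
proof (cases "i = j")
  case False
  then show ?thesis
    by (auto simp: flip_def fun_eq_iff list_update_swap algebra_simps)
qed simp

lemma fold_flip_comm: "fold flip xs (flip i C) = flip i (fold flip xs C)"
  by (induction xs arbitrary: C) (simp_all, metis flip_comm)

lemma fold_flip_insort: "fold flip (insort i xs) C = flip i (fold flip xs C)"
  by (induction xs arbitrary: C) (simp_all add: fold_flip_comm, metis flip_comm)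

lemma flipS_empty [simp]: "flipS {} C = C"
  by (simp add: flipS_def)

lemma flipS_insert:
  "finite S \<Longrightarrow> i \<notin> S \<Longrightarrow> flipS (insert i S) C = flip i (flipS S C)"
  by (simp add: flipS_def fold_flip_insort)

lemma flip_plus: "flip i (\<lambda>\<alpha>. A \<alpha> + B \<alpha>) = (\<lambda>\<alpha>. flip i A \<alpha> + flip i B \<alpha>)"
  by (auto simp: flip_def fun_eq_iff algebra_simps)

lemma flip_mult: "flip i (\<lambda>\<alpha>. c * A \<alpha>) = (\<lambda>\<alpha>. c * flip i A \<alpha>)"
  by (auto simp: flip_def fun_eq_iff algebra_simps)

lemma flipS_plus:
  assumes "finite S" shows "flipS S (\<lambda>\<alpha>. A \<alpha> + B \<alpha>) = (\<lambda>\<alpha>. flipS S A \<alpha> + flipS S B \<alpha>)"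
  using assms by (induction S rule: finite_induct) (auto simp: flipS_insert flip_plus)

lemma flipS_mult:
  assumes "finite S" shows "flipS S (\<lambda>\<alpha>. c * A \<alpha>) = (\<lambda>\<alpha>. c * flipS S A \<alpha>)"
  using assms by (induction S rule: finite_induct) (auto simp: flipS_insert flip_mult)

lemma flipS_X:
  assumes "finite S" shows "flipS S (\<lambda>\<alpha>. pCons 0 (A \<alpha>)) = (\<lambda>\<alpha>. pCons 0 (flipS S A \<alpha>))"
  using flipS_mult[OF assms, of "[:0,1:]" A] by simp

lemma slice_flip_Suc: "slice (flip (Suc i) C) b = flip i (slice C b)"
  by (auto simp: slice_def flip_def fun_eq_iff)

lemma slice_flip0_T: "slice (flip 0 C) True = slice C False"
  by (auto simp: slice_def flip_def fun_eq_iff)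

lemma slice_flip0_F: "slice (flip 0 C) False = (\<lambda>\<alpha>. [:0,1:] * slice C True \<alpha>)"
  by (auto simp: slice_def flip_def fun_eq_iff)

lemma slice_flipS_Suc:
  assumes "finite S" shows "slice (flipS (Suc ` S) C) b = flipS S (slice C b)"
  using assms
proof (induction S rule: finite_induct)
  case (insert i S)
  have "flipS (insert (Suc i) (Suc ` S)) C = flip (Suc i) (flipS (Suc ` S) C)"
    by (rule flipS_insert) (use insert in auto)
  then show ?case using insert by (simp add: slice_flip_Suc flipS_insert)
qed simp

lemma interp_X: "interp ls rs (\<lambda>\<alpha>. pCons 0 (A \<alpha>)) = pCons 0 (interp ls rs A)"
  using interp_mult[of ls rs "[:0,1:]" A] by simp

lemma interp_flipS_cons:
  assumes "finite S"
  shows "interp (l # ls) (r # rs) (flipS S C) =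
    (if 0 \<in> S then smult l (interp ls rs (flipS {i. Suc i \<in> S} (slice C False)))
                 + smult r ([:0,1:] * interp ls rs (flipS {i. Suc i \<in> S} (slice C True)))
     else smult l (interp ls rs (flipS {i. Suc i \<in> S} (slice C True)))
                 + smult r (interp ls rs (flipS {i. Suc i \<in> S} (slice C False))))"
proof -
  define S' where "S' = {i. Suc i \<in> S}"
  have "S' \<subseteq> (\<lambda>i. i - 1) ` S" unfolding S'_def by force
  then have fin: "finite S'" using assms finite_surj by blast
  have split: "S = (if 0 \<in> S then insert 0 (Suc ` S') else Suc ` S')"
    unfolding S'_def by (auto simp: image_iff) (metis not0_implies_Suc)+
  show ?thesis
  proof (cases "0 \<in> S")
    case True
    then have "flipS S C = flip 0 (flipS (Suc ` S') C)"
      using split fin by (metis flipS_insert finite_imageI imageE nat.distinct(1))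
    then show ?thesis using True fin
      by (simp del: interp.simps(1) add: interp_cons slice_flip0_T slice_flip0_F slice_flipS_Suc interp_mult interp_X S'_def[symmetric])
  next
    case False
    then have "flipS S C = flipS (Suc ` S') C" using split by simp
    then show ?thesis using False fin
      by (simp del: interp.simps(1) add: interp_cons slice_flipS_Suc S'_def[symmetric])
  qed
qed

definition NN :: "real poly \<Rightarrow> bool" where
  "NN p \<longleftrightarrow> standard p \<and> nonpos_zeros p"

definition g2 :: "bool \<Rightarrow> real \<Rightarrow> real \<Rightarrow> real poly \<Rightarrow> real poly \<Rightarrow> real poly" where
  "g2 e l r u0 u1 = (if e then smult l u0 + smult r ([:0,1:] * u1) else smult l u1 + smult r u0)"

lemma interp_flipS_g2:
  assumes "finite S"
  shows "interp (l # ls) (r # rs) (flipS S C) =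
     g2 (0 \<in> S) l r (interp ls rs (flipS {i. Suc i \<in> S} (slice C False)))
                    (interp ls rs (flipS {i. Suc i \<in> S} (slice C True)))"
  using interp_flipS_cons[OF assms] by (simp add: g2_def)

definition ev :: "real poly \<Rightarrow> complex \<Rightarrow> complex" where
  "ev p z = poly (map_poly complex_of_real p) z"

lemma map_poly_of_real_add: "map_poly complex_of_real (p + q) = map_poly of_real p + map_poly of_real q"
  by (rule poly_eqI) (simp add: coeff_map_poly)

lemma ev_add [simp]: "ev (p + q) z = ev p z + ev q z"
  by (simp add: ev_def map_poly_of_real_add)

lemma ev_smult [simp]: "ev (smult c p) z = of_real c * ev p z"
proof -
  have "map_poly complex_of_real (smult c p) = smult (of_real c) (map_poly of_real p)"
    by (rule poly_eqI) (simp add: coeff_map_poly)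
  then show ?thesis by (simp add: ev_def)
qed

lemma ev_X [simp]: "ev ([:0,1:] * p) z = z * ev p z"
  by (simp add: ev_def map_poly_pCons)

lemma ev_pCons0 [simp]: "ev (pCons 0 p) z = z * ev p z"
  by (simp add: ev_def map_poly_pCons)

lemma ev_0 [simp]: "ev 0 z = 0"
  by (simp add: ev_def)

lemma ev_real: "ev p (of_real x) = of_real (poly p x)"
  unfolding ev_def by (induction p) (auto simp: map_poly_pCons)

lemma ev_cnj: "cnj (ev p z) = ev p (cnj z)"
  unfolding ev_def by (rule poly_cnj_real) (simp add: coeff_map_poly)

lemma map_poly_of_real_eq_0: "map_poly complex_of_real p = 0 \<longleftrightarrow> p = 0"
  by (rule map_poly_eq_0_iff) auto

lemma infinite_UHP: "infinite {z::complex. Im z > 0}"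
proof -
  have "range (\<lambda>n::nat. of_nat (Suc n) * \<i>) \<subseteq> {z::complex. Im z > 0}" by auto
  moreover have "inj (\<lambda>n::nat. of_nat (Suc n) * (\<i>::complex))"
    by (auto simp: inj_def)
  ultimately show ?thesis
    by (meson finite_imageD finite_subset infinite_UNIV_nat)
qed

lemma ev_eq_on_UHP:
  assumes "\<And>z. Im z > 0 \<Longrightarrow> ev p z = ev q z"
  shows "p = q"
proof (rule ccontr)
  assume "p \<noteq> q"
  then have nz: "map_poly complex_of_real (p - q) \<noteq> 0"
    by (simp add: map_poly_of_real_eq_0)
  have "{z::complex. Im z > 0} \<subseteq> {z. poly (map_poly complex_of_real (p - q)) z = 0}"
  proof
    fix z :: complex assume "z \<in> {z. Im z > 0}"
    then have "ev p z = ev q z" using assms by auto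
    moreover have "ev (p - q) z = ev p z - ev q z"
      using ev_add[of "p - q" q z] by simp
    ultimately show "z \<in> {z. poly (map_poly complex_of_real (p - q)) z = 0}"
      by (simp add: ev_def)
  qed
  then show False using poly_roots_finite[OF nz] infinite_UHP finite_subset by blast
qed

lemma nonpos_zeros_ev:
  "nonpos_zeros p \<longleftrightarrow> p = 0 \<or> (\<forall>z. ev p z = 0 \<longrightarrow> z \<in> \<real> \<and> Re z \<le> 0)"
  by (simp add: nonpos_zeros_def ev_def)

lemma standard_add:
  assumes "standard p" "standard q" shows "standard (p + q)"
proof (cases "p = 0 \<or> q = 0")
  case True then show ?thesis using assms by auto
next
  case False
  then have lp: "lead_coeff p > 0" and lq: "lead_coeff q > 0" using assms by (auto simp: standard_def)
  consider "degree p < degree q" | "degree q < degree p" | "degree p = degree q" by linarith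
  then show ?thesis
  proof cases
    case 1
    have "lead_coeff (p + q) = lead_coeff q" using 1 by (rule lead_coeff_add_le)
    then show ?thesis using lq unfolding standard_def by simp
  next
    case 2
    have "lead_coeff (q + p) = lead_coeff p" using 2 by (rule lead_coeff_add_le)
    then show ?thesis using lp unfolding standard_def by (simp add: add.commute)
  next
    case 3
    have c: "coeff (p + q) (degree p) = lead_coeff p + lead_coeff q" using 3 by simp
    then have ne: "coeff (p + q) (degree p) \<noteq> 0" using lp lq by simp
    have "degree (p + q) \<le> degree p" using 3 degree_add_le[of p "degree p" q] by simp
    moreover have "degree p \<le> degree (p + q)" using ne le_degree by blast
    ultimately have "degree (p + q) = degree p" by simp
    then show ?thesis using c lp lq by (simp add: standard_def)
  qed
qed

lemma standard_smult: "c > 0 \<Longrightarrow> standard p \<Longrightarrow> standard (smult c p)"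
  by (auto simp: standard_def lead_coeff_smult)

lemma standard_X: "standard p \<Longrightarrow> standard ([:0,1:] * p)"
  by (auto simp: standard_def lead_coeff_mult)

lemma NN_smult: "c > 0 \<Longrightarrow> NN p \<Longrightarrow> NN (smult c p)"
  by (auto simp: NN_def standard_smult nonpos_zeros_ev)

lemma NN_X: assumes "NN p" shows "NN ([:0,1:] * p)"
proof -
  have "standard ([:0,1:] * p)" using assms standard_X NN_def by blast
  moreover have "nonpos_zeros ([:0,1:] * p)"
    using assms unfolding NN_def nonpos_zeros_ev by (metis ev_X mult_eq_0_iff Reals_0 order_refl zero_complex.sel(1))
  ultimately show ?thesis by (simp add: NN_def)
qed

lemma NN_zero [simp]: "NN 0"
  by (simp add: NN_def standard_def nonpos_zeros_def)

lemma NN_lead: "NN p \<Longrightarrow> p \<noteq> 0 \<Longrightarrow> lead_coeff p > 0"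
  by (simp add: NN_def standard_def)

lemma NN_nz: "NN p \<Longrightarrow> p \<noteq> 0 \<Longrightarrow> ev p z = 0 \<Longrightarrow> z \<in> \<real> \<and> Re z \<le> 0"
  by (simp add: NN_def nonpos_zeros_ev)

lemma NN_UHP: "NN p \<Longrightarrow> p \<noteq> 0 \<Longrightarrow> Im z \<noteq> 0 \<Longrightarrow> ev p z \<noteq> 0"
  using NN_nz complex_is_Real_iff by blast

lemma NN_pos:
  assumes "NN p" "p \<noteq> 0" "x > 0" shows "poly p x > 0"
proof -
  have nr: "poly p y \<noteq> 0" if "y > 0" for y
  proof
    assume "poly p y = 0"
    then have "ev p (of_real y) = 0" by (simp add: ev_real)
    then show False using NN_nz[OF assms(1,2)] that by force
  qed
  obtain n where n: "\<forall>x\<ge>n. poly p x \<ge> lead_coeff p"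
    using poly_pinfty_gt_lc NN_lead[OF assms(1,2)] by blast
  show ?thesis
  proof (rule ccontr)
    assume "\<not> poly p x > 0"
    then have "poly p x < 0" using nr[OF assms(3)] by linarith
    moreover have "poly p (max n x + 1) > 0"
      using n NN_lead[OF assms(1,2)] by (meson le_add_same_cancel1 max.cobounded1 order_less_le_trans order_trans zero_le_one)
    moreover have "x < max n x + 1" by linarith
    ultimately obtain y where "x < y" "poly p y = 0"
      using poly_IVT_pos[of x "max n x + 1" p] by blast
    then show False using nr assms(3) by auto
  qed
qed

lemma NN_nonneg: "NN p \<Longrightarrow> x > 0 \<Longrightarrow> poly p x \<ge> 0"
  using NN_pos[of p x] by (cases "p = 0") auto

lemma ev_holo: "(ev p) holomorphic_on A"
  unfolding ev_def by (intro holomorphic_intros)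

lemma ev_cont: "continuous_on A (ev p)"
  using ev_holo holomorphic_on_imp_continuous_on by blast

lemma OM:
  assumes fnz: "\<And>z. Im z > 0 \<Longrightarrow> ev f z \<noteq> 0"
    and im: "\<And>z. Im z > 0 \<Longrightarrow> Im (ev f z * cnj (ev g z)) \<ge> 0"
    and w: "Im w > 0" and eq: "ev g w = of_real c * ev f w"
  shows "g = smult c f"
proof -
  define U where "U = {z::complex. 0 < Im z}"
  define \<phi> where "\<phi> = (\<lambda>z. ev g z / ev f z)"
  have oU: "open U" unfolding U_def by (rule open_halfspace_Im_gt)
  have cU: "connected U" unfolding U_def by (rule connected_halfspace_Im_gt)
  have hol: "\<phi> holomorphic_on U"
    unfolding \<phi>_def U_def by (intro holomorphic_on_divide ev_holo) (use fnz in auto)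
  have imphi: "Im (\<phi> z) \<le> 0" if "z \<in> U" for z
  proof -
    have fz: "ev f z \<noteq> 0" using fnz that U_def by auto
    have "\<phi> z = ev g z * cnj (ev f z) / of_real ((cmod (ev f z))\<^sup>2)"
      unfolding \<phi>_def using fz by (metis complex_div_cnj of_real_power)
    moreover have "Im (ev g z * cnj (ev f z)) = - Im (ev f z * cnj (ev g z))"
      by simp
    moreover have "Im (ev f z * cnj (ev g z)) \<ge> 0" using im that U_def by auto
    moreover have "(complex_of_real (cmod (ev f z)))\<^sup>2 = of_real ((cmod (ev f z))\<^sup>2)" by simp
    ultimately have "Im (\<phi> z) = - Im (ev f z * cnj (ev g z)) / (cmod (ev f z))\<^sup>2"
      by (simp only: Im_divide_of_real)
    then show ?thesis using \<open>Im (ev f z * cnj (ev g z)) \<ge> 0\<close> by (simp add: divide_nonpos_nonneg)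
  qed
  have wU: "w \<in> U" using w U_def by auto
  have phiw: "\<phi> w = of_real c" unfolding \<phi>_def using eq fnz[OF w] by simp
  have const: "\<phi> constant_on U"
  proof (rule ccontr)
    assume nc: "\<not> \<phi> constant_on U"
    have op: "open (\<phi> ` U)" by (rule open_mapping_thm[OF hol oU cU oU subset_refl nc])
    have "\<phi> w \<in> \<phi> ` U" using wU by (rule imageI)
    then obtain e where e: "e > 0" "ball (\<phi> w) e \<subseteq> \<phi> ` U"
      using op unfolding open_contains_ball by auto
    have "\<phi> w + of_real (e/2) * \<i> \<in> ball (\<phi> w) e"
      using e by (simp add: dist_norm norm_mult)
    then have "\<phi> w + of_real (e/2) * \<i> \<in> \<phi> ` U" using e(2) by (rule subsetD[rotated])
    then obtain z where "z \<in> U" "\<phi> z = \<phi> w + of_real (e/2) * \<i>" by (auto simp: image_iff)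
    then have "Im (\<phi> z) = e/2" using phiw by simp
    then show False using imphi \<open>z \<in> U\<close> e by fastforce
  qed
  have "ev g z = ev (smult c f) z" if "Im z > 0" for z
  proof -
    have "\<phi> z = \<phi> w" using const wU that unfolding constant_on_def U_def by auto
    then show ?thesis using phiw fnz[OF that] unfolding \<phi>_def by (simp add: divide_eq_eq)
  qed
  then show ?thesis by (rule ev_eq_on_UHP)
qed

definition ImC :: "real poly \<Rightarrow> real poly \<Rightarrow> bool" where
  "ImC f g \<longleftrightarrow> (\<forall>z. Im z > 0 \<longrightarrow> Im (ev f z * cnj (ev g z)) \<ge> 0)"

lemma nonpos_zerosI:
  assumes "\<And>z. Im z > 0 \<Longrightarrow> ev p z \<noteq> 0" and "\<And>x. x > 0 \<Longrightarrow> poly p x \<noteq> 0"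
  shows "nonpos_zeros p"
  unfolding nonpos_zeros_ev
proof (intro disjI2 allI impI)
  fix z assume z: "ev p z = 0"
  consider "Im z > 0" | "Im z < 0" | "Im z = 0" by linarith
  then show "z \<in> \<real> \<and> Re z \<le> 0"
  proof cases
    case 1 then show ?thesis using assms(1) z by auto
  next
    case 2
    have "ev p (cnj z) = 0" using z ev_cnj[of p z] by simp
    then show ?thesis using assms(1)[of "cnj z"] 2 by auto
  next
    case 3
    then have zr: "z = of_real (Re z)" by (simp add: complex_eq_iff)
    then have "poly p (Re z) = 0" using z ev_real[of p "Re z"] by simp
    then have "\<not> Re z > 0" using assms(2) by blast
    then show ?thesis using zr by (metis Reals_of_real linorder_not_less)
  qed
qed

lemma lemmaB:
  assumes f: "NN f" and g: "NN g" and im: "ImC f g" and a: "a > 0" and b: "b > 0"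
  shows "NN (smult a f + smult b g)"
proof (cases "f = 0 \<or> g = 0")
  case True
  then show ?thesis using NN_smult f g a b by auto
next
  case False
  then have fz: "f \<noteq> 0" and gz: "g \<noteq> 0" by auto
  have st: "standard (smult a f + smult b g)"
    using f g a b by (intro standard_add standard_smult) (auto simp: NN_def)
  have "nonpos_zeros (smult a f + smult b g)"
  proof (rule nonpos_zerosI)
    fix z :: complex assume z: "Im z > 0"
    show "ev (smult a f + smult b g) z \<noteq> 0"
    proof
      assume "ev (smult a f + smult b g) z = 0"
      then have "of_real a * ev f z + of_real b * ev g z = 0" by simp
      then have "ev g z = of_real (- a / b) * ev f z" using b
        by (simp add: field_simps) (metis add.commute add_eq_0_iff of_real_mult)
      then have "g = smult (- a / b) f"
        using OM[of f g z "- a / b"] NN_UHP[OF f fz] im z unfolding ImC_def by auto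
      then have "lead_coeff g = (- a / b) * lead_coeff f" by (simp add: lead_coeff_smult)
      moreover have "(- a / b) * lead_coeff f < 0"
        using NN_lead[OF f fz] a b by (simp add: mult_neg_pos)
      ultimately show False using NN_lead[OF g gz] by simp
    qed
  next
    fix x :: real assume "x > 0"
    then have "poly f x > 0" "poly g x > 0" using NN_pos f g fz gz by auto
    then have "a * poly f x + b * poly g x > 0" using a b by (simp add: add_pos_pos)
    then show "poly (smult a f + smult b g) x \<noteq> 0" by simp
  qed
  then show ?thesis using st by (simp add: NN_def)
qed

lemma lemmaRef:
  assumes f: "NN f" "f \<noteq> 0" and g: "standard g" and pos: "\<And>x. x > 0 \<Longrightarrow> g \<noteq> 0 \<Longrightarrow> poly g x > 0"
    and im: "ImC f g"
  shows "NN g"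
proof (cases "g = 0")
  case True then show ?thesis by simp
next
  case False
  have "nonpos_zeros g"
  proof (rule nonpos_zerosI)
    fix z :: complex assume z: "Im z > 0"
    show "ev g z \<noteq> 0"
    proof
      assume "ev g z = 0"
      then have "ev g z = of_real 0 * ev f z" by simp
      then have "g = smult 0 f"
        using OM[of f g z 0] NN_UHP[OF f] im z unfolding ImC_def by auto
      then show False using False by simp
    qed
  next
    fix x :: real assume "x > 0"
    then show "poly g x \<noteq> 0" using pos False by fastforce
  qed
  then show ?thesis using g by (simp add: NN_def)
qed

lemma ev_const_deg:
  assumes "infinite S" "\<And>z. z \<in> S \<Longrightarrow> ev p z = k"
  shows "degree p = 0"
proof -
  define q where "q = map_poly complex_of_real p - [:k:]"
  have "S \<subseteq> {z. poly q z = 0}" using assms(2) by (auto simp: q_def ev_def)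
  then have "q = 0" using poly_roots_finite[of q] assms(1) finite_subset by blast
  then have "map_poly complex_of_real p = [:k:]" by (simp add: q_def)
  then have "degree (map_poly complex_of_real p) = 0" by simp
  moreover have "degree (map_poly complex_of_real p) = degree p" by (rule degree_map_poly) simp
  ultimately show ?thesis by simp
qed

lemma hurwitz_poly:
  assumes oS: "open S" and cS: "connected S" and iS: "infinite S"
    and nz: "\<And>s z. s > 0 \<Longrightarrow> z \<in> S \<Longrightarrow> ev (A + smult s B) z \<noteq> 0"
    and A: "A \<noteq> 0" and z0: "z0 \<in> S"
  shows "ev A z0 \<noteq> 0"
proof (cases "degree A = 0")
  case True
  then obtain c where "A = [:c:]" by (meson degree_eq_zeroE)
  moreover have "map_poly complex_of_real [:c:] = [:of_real c:]"
    by (rule poly_eqI) (simp add: coeff_map_poly coeff_pCons split: nat.split)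
  ultimately show ?thesis using A by (simp add: ev_def)
next
  case False
  have nc: "\<not> (ev A) constant_on S"
  proof
    assume "(ev A) constant_on S"
    then obtain k where "\<And>z. z \<in> S \<Longrightarrow> ev A z = k" unfolding constant_on_def by blast
    then have "degree A = 0" by (rule ev_const_deg[OF iS])
    with False show False by simp
  qed
  define F where "F = (\<lambda>n::nat. ev (A + smult (1 / real (Suc n)) B))"
  have holF: "F n holomorphic_on S" for n unfolding F_def by (rule ev_holo)
  have ul: "uniform_limit K F (ev A) sequentially" if K: "compact K" "K \<subseteq> S" for K
  proof (rule uniform_limitI)
    fix e :: real assume e: "e > 0"
    have "compact (ev B ` K)" by (rule compact_continuous_image[OF ev_cont K(1)])
    then have "bounded (ev B ` K)" by (rule compact_imp_bounded)
    then obtain M where M0: "M > 0" "\<forall>y\<in>ev B ` K. norm y \<le> M"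
      unfolding bounded_pos by blast
    then have M: "M > 0" "\<And>z. z \<in> K \<Longrightarrow> norm (ev B z) \<le> M" by auto
    obtain N :: nat where N: "real N > M / e" using reals_Archimedean2 by blast
    show "\<forall>\<^sub>F n in sequentially. \<forall>x\<in>K. dist (F n x) (ev A x) < e"
    proof (rule eventually_sequentiallyI[of N], intro ballI)
      fix n x assume n: "N \<le> n" and x: "x \<in> K"
      have nn: "norm (complex_of_real (1 / real (Suc n))) = 1 / real (Suc n)"
        by (simp only: norm_of_real) simp
      have "dist (F n x) (ev A x) = norm (complex_of_real (1 / real (Suc n)) * ev B x)"
        by (simp add: F_def dist_norm)
      also have "\<dots> = norm (ev B x) / real (Suc n)"
        by (simp only: norm_mult nn) simp
      also have "\<dots> \<le> M / real (Suc n)"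
        using M(2)[OF x] by (simp add: divide_right_mono)
      also have "\<dots> < e"
      proof -
        have "M / e < real (Suc n)" using N n by linarith
        then show ?thesis using e by (simp add: field_simps)
      qed
      finally show "dist (F n x) (ev A x) < e" .
    qed
  qed
  show ?thesis
  proof (rule Hurwitz_no_zeros[OF oS cS holF ev_holo ul nc _ z0])
    fix n z assume "z \<in> S"
    then show "F n z \<noteq> 0" unfolding F_def by (intro nz) auto
  qed
qed

lemma infinite_RHP: "infinite {z::complex. Re z > 0}"
proof -
  have "range (\<lambda>n::nat. complex_of_nat (Suc n)) \<subseteq> {z::complex. Re z > 0}" by auto
  moreover have "inj (\<lambda>n::nat. complex_of_nat (Suc n))"
    by (auto simp: inj_def)
  ultimately show ?thesis
    by (meson finite_imageD finite_subset infinite_UNIV_nat)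
qed

lemma smult_comb: "A + smult t (smult c A) = smult (1 + t * c) (A::real poly)"
  by (simp add: smult_add_left)

lemma family_nz:
  assumes H: "\<And>s. s > 0 \<Longrightarrow> NN (A + smult s B)" and A: "A \<noteq> 0" and s: "s > 0"
  shows "A + smult s B \<noteq> 0"
proof
  assume 0: "A + smult s B = 0"
  have "smult s B = - A" using 0 by (simp add: eq_neg_iff_add_eq_0)
  then have "smult (1/s) (smult s B) = smult (1/s) (- A)" by simp
  then have B: "B = smult (-1/s) A" using s by simp
  have e1: "A + smult (2 * s) B = smult (-1) A"
    unfolding B smult_comb using s by simp
  have "NN (smult (-1) A)" using H[of "2 * s"] s e1 by simp
  then have l1: "lead_coeff (smult (-1) A) > 0" using NN_lead[of "smult (-1) A"] A by simp
  have e2: "A + smult (s / 2) B = smult (1/2) A"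
    unfolding B smult_comb using s by simp
  have "NN (smult (1/2) A)" using H[of "s / 2"] s e2 by simp
  then have "lead_coeff (smult (1/2) A) > 0" using NN_lead[of "smult (1/2) A"] A by simp
  then show False using l1 by (simp add: lead_coeff_smult)
qed

lemma HL:
  assumes H: "\<And>s. s > 0 \<Longrightarrow> NN (A + smult s B)"
  shows "NN A"
proof (cases "A = 0")
  case True then show ?thesis by simp
next
  case False
  have fnz: "A + smult s B \<noteq> 0" if "s > 0" for s using family_nz[OF H False that] .
  have uhp: "ev A z \<noteq> 0" if "Im z > 0" for z
  proof (rule hurwitz_poly[OF open_halfspace_Im_gt connected_halfspace_Im_gt infinite_UHP _ False])
    fix s :: real and w :: complex assume "s > 0" "w \<in> {z. 0 < Im z}"
    then show "ev (A + smult s B) w \<noteq> 0" using NN_UHP[OF H fnz] by auto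
  qed (use that in auto)
  have rhp: "poly A x \<noteq> 0" if "x > 0" for x
  proof -
    have "ev A (of_real x) \<noteq> 0"
    proof (rule hurwitz_poly[OF open_halfspace_Re_gt connected_halfspace_Re_gt infinite_RHP _ False])
      fix s :: real and w :: complex assume "s > 0" "w \<in> {z. 0 < Re z}"
      then show "ev (A + smult s B) w \<noteq> 0" using NN_nz[OF H fnz] by fastforce
    qed (use that in auto)
    then show ?thesis by (simp add: ev_real)
  qed
  have nonneg: "poly A x \<ge> 0" if x: "x > 0" for x
  proof (rule ccontr)
    assume "\<not> poly A x \<ge> 0"
    then have neg: "poly A x < 0" by simp
    define s where "s = - poly A x / (2 * (\<bar>poly B x\<bar> + 1))"
    have "2 * (\<bar>poly B x\<bar> + 1) > 0" by simp
    then have s0: "s > 0" unfolding s_def using neg by (intro divide_pos_pos) auto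
    have "s * \<bar>poly B x\<bar> \<le> - poly A x / 2"
    proof -
      have "s * \<bar>poly B x\<bar> = (- poly A x / 2) * (\<bar>poly B x\<bar> / (\<bar>poly B x\<bar> + 1))"
        unfolding s_def by (simp add: field_simps)
      also have "\<dots> \<le> (- poly A x / 2) * 1"
        using neg by (intro mult_left_mono) auto
      finally show ?thesis by simp
    qed
    moreover have "s * poly B x \<le> s * \<bar>poly B x\<bar>" using s0 by (simp add: mult_left_mono)
    ultimately have "poly (A + smult s B) x < 0" using neg by simp
    moreover have "poly (A + smult s B) x \<ge> 0" using NN_nonneg[OF H[OF s0] x] .
    ultimately show False by simp
  qed
  have lead: "lead_coeff A > 0"
  proof (rule ccontr)
    assume "\<not> lead_coeff A > 0"
    moreover have "lead_coeff A \<noteq> 0" using False by simp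
    ultimately have "lead_coeff A < 0" by linarith
    then have "lead_coeff (- A) > 0" by (simp add: lead_coeff_minus)
    then obtain n where n: "\<forall>x\<ge>n. poly (- A) x \<ge> lead_coeff (- A)"
      using poly_pinfty_gt_lc by blast
    have "poly (- A) (max n 1) \<ge> lead_coeff (- A)" using n by simp
    then have "poly A (max n 1) < 0" using \<open>lead_coeff (- A) > 0\<close> by simp
    moreover have "poly A (max n 1) \<ge> 0" by (rule nonneg) simp
    ultimately show False by simp
  qed
  have "nonpos_zeros A" by (rule nonpos_zerosI[OF uhp rhp])
  then show ?thesis using lead by (simp add: NN_def standard_def)
qed

lemma ImC_add_right: assumes "ImC f h1" "ImC f h2" shows "ImC f (h1 + h2)"
  unfolding ImC_def
proof (intro allI impI)
  fix z :: complex assume z: "Im z > 0"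
  have "ev f z * cnj (ev (h1 + h2) z) = ev f z * cnj (ev h1 z) + ev f z * cnj (ev h2 z)"
    by (simp add: distrib_left)
  then have "Im (ev f z * cnj (ev (h1 + h2) z)) = Im (ev f z * cnj (ev h1 z)) + Im (ev f z * cnj (ev h2 z))"
    by (simp only: plus_complex.sel)
  then show "Im (ev f z * cnj (ev (h1 + h2) z)) \<ge> 0" using assms z unfolding ImC_def
    by (metis add_nonneg_nonneg)
qed

lemma ImC_add_left: assumes "ImC f1 g" "ImC f2 g" shows "ImC (f1 + f2) g"
  unfolding ImC_def
proof (intro allI impI)
  fix z :: complex assume z: "Im z > 0"
  have "ev (f1 + f2) z * cnj (ev g z) = ev f1 z * cnj (ev g z) + ev f2 z * cnj (ev g z)"
    by (simp add: distrib_right)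
  then have "Im (ev (f1 + f2) z * cnj (ev g z)) = Im (ev f1 z * cnj (ev g z)) + Im (ev f2 z * cnj (ev g z))"
    by (simp only: plus_complex.sel)
  then show "Im (ev (f1 + f2) z * cnj (ev g z)) \<ge> 0" using assms z unfolding ImC_def
    by (metis add_nonneg_nonneg)
qed

lemma ImC_XX: assumes "ImC f g" shows "ImC ([:0,1:] * f) ([:0,1:] * g)"
  unfolding ImC_def
proof (intro allI impI)
  fix z :: complex assume z: "Im z > 0"
  define w where "w = ev f z * cnj (ev g z)"
  have "ev ([:0,1:] * f) z * cnj (ev ([:0,1:] * g) z) = (z * cnj z) * w"
    by (simp add: w_def mult_ac)
  also have "\<dots> = of_real ((cmod z)\<^sup>2) * w" by (simp only: complex_norm_square)
  finally have "Im (ev ([:0,1:] * f) z * cnj (ev ([:0,1:] * g) z)) = (cmod z)\<^sup>2 * Im w"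
    by simp
  moreover have "Im w \<ge> 0" using assms z by (simp add: ImC_def w_def)
  ultimately show "Im (ev ([:0,1:] * f) z * cnj (ev ([:0,1:] * g) z)) \<ge> 0" by simp
qed

definition ang :: "complex \<Rightarrow> real" where
  "ang w = pi/2 - arctan (Re w / Im w)"

lemma ang_bounds: "0 < ang w" "ang w < pi"
  using arctan_bounded[of "Re w / Im w"] by (auto simp: ang_def)

lemma arctan_inv_pos: "x > 0 \<Longrightarrow> arctan (1 / x) = pi/2 - arctan x"
  using arctan_inverse[of x] by (simp add: inverse_eq_divide)

lemma ang_polar:
  assumes "Im w > 0" shows "w = of_real (cmod w) * cis (ang w)"
proof -
  define t where "t = Re w / Im w"
  have sq: "sqrt (1 + t\<^sup>2) = cmod w / Im w"
  proof (rule real_sqrt_unique)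
    have "(cmod w)\<^sup>2 = (Re w)\<^sup>2 + (Im w)\<^sup>2" by (simp add: cmod_power2)
    then show "(cmod w / Im w)\<^sup>2 = 1 + t\<^sup>2"
      using assms unfolding t_def by (simp add: power_divide field_simps)
    show "0 \<le> cmod w / Im w" using assms by simp
  qed
  have c: "cos (ang w) = sin (arctan t)" unfolding ang_def t_def by (simp add: sin_cos_eq)
  have s: "sin (ang w) = cos (arctan t)" unfolding ang_def t_def by (simp add: cos_sin_eq)
  have "w \<noteq> 0" using assms by auto
  then have cm: "cmod w > 0" by simp
  have c2: "cos (ang w) = t / (cmod w / Im w)" by (simp only: c sin_arctan sq)
  have s2: "sin (ang w) = 1 / (cmod w / Im w)" by (simp only: s cos_arctan sq)
  show ?thesis
  proof (rule complex_eqI)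
    have "cmod w * (t / (cmod w / Im w)) = t * Im w"
      using cm by (simp add: divide_divide_eq_right)
    also have "\<dots> = Re w" using assms by (simp add: t_def)
    finally show "Re w = Re (of_real (cmod w) * cis (ang w))"
      by (simp add: c2)
    have "cmod w * (1 / (cmod w / Im w)) = Im w"
      using cm by (simp add: divide_divide_eq_right)
    then show "Im w = Im (of_real (cmod w) * cis (ang w))"
      by (simp add: s2)
  qed
qed

lemma ang_mono:
  assumes "Im z > 0" "r1 \<le> r2"
  shows "ang (z - of_real r1) \<le> ang (z - of_real r2)"
proof -
  have "(Re z - r2) / Im z \<le> (Re z - r1) / Im z"
    using assms by (simp add: divide_right_mono)
  then have "arctan ((Re z - r2) / Im z) \<le> arctan ((Re z - r1) / Im z)"
    by (rule arctan_monotone')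
  then show ?thesis by (simp add: ang_def)
qed

lemma ang_small:
  assumes "c > 0" "e > 0" shows "ang (Complex c e) \<le> e / c"
proof -
  have pos: "e / c > 0" using assms by (intro divide_pos_pos) auto
  have "arctan (1 / (e / c)) = pi/2 - arctan (e / c)" by (rule arctan_inv_pos[OF pos])
  moreover have "1 / (e / c) = c / e" by simp
  ultimately have "arctan (c / e) = pi/2 - arctan (e / c)" by simp
  then have "ang (Complex c e) = arctan (e / c)" by (simp add: ang_def)
  also have "\<dots> \<le> e / c" using pos by (intro arctan_le_self) simp
  finally show ?thesis .
qed

lemma ang_big:
  assumes "c < 0" "e > 0" shows "ang (Complex c e) \<ge> pi - e / (- c)"
proof -
  have pos: "e / (- c) > 0" using assms by (intro divide_pos_pos) auto
  have "arctan (1 / (e / (- c))) = pi/2 - arctan (e / (- c))" by (rule arctan_inv_pos[OF pos])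
  moreover have "1 / (e / (- c)) = (- c) / e" by simp
  ultimately have "arctan ((- c) / e) = pi/2 - arctan (e / (- c))" by simp
  moreover have "c / e = - ((- c) / e)" by simp
  ultimately have "arctan (c / e) = - (pi/2 - arctan (e / (- c)))"
    by (simp only: arctan_minus)
  then have "ang (Complex c e) = pi - arctan (e / (- c))" by (simp add: ang_def)
  moreover have "arctan (e / (- c)) \<le> e / (- c)" using pos by (intro arctan_le_self) simp
  ultimately show ?thesis by simp
qed

lemma ang_cont:
  assumes "continuous_on S f" "\<And>x. x \<in> S \<Longrightarrow> Im (f x) \<noteq> 0"
  shows "continuous_on S (\<lambda>x. ang (f x))"
  unfolding ang_def using assms by (intro continuous_intros) auto

lemma NN_factor:
  assumes "NN p" "p \<noteq> 0"
  obtains R :: "real multiset" where "\<forall>r\<in>#R. r \<le> 0"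
    "\<And>z. ev p z = of_real (lead_coeff p) * (\<Prod>r\<in>#R. (z - of_real r))"
proof -
  define P where "P = map_poly complex_of_real p"
  have Pnz: "P \<noteq> 0" using assms(2) by (simp add: P_def map_poly_of_real_eq_0)
  have lP: "lead_coeff P = of_real (lead_coeff p)"
    unfolding P_def using assms(2) by (intro lead_coeff_map_poly_nz) auto
  have dec: "smult (lead_coeff P) (\<Prod>x\<in>#proots P. [:-x, 1:]) = P"
    by (rule complex_poly_decompose_multiset)
  have roots: "x \<in> \<real> \<and> Re x \<le> 0" if "x \<in># proots P" for x
  proof -
    have "poly P x = 0" using that Pnz by simp
    then have "ev p x = 0" by (simp add: ev_def P_def)
    then show ?thesis using NN_nz[OF assms] by blast
  qed
  define R where "R = image_mset Re (proots P)"
  have R0: "\<forall>r\<in>#R. r \<le> 0" using roots unfolding R_def by auto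
  have ev: "ev p z = of_real (lead_coeff p) * (\<Prod>r\<in>#R. (z - of_real r))" for z
  proof -
    have "ev p z = poly P z" by (simp add: ev_def P_def)
    also have "\<dots> = lead_coeff P * (\<Prod>x\<in>#proots P. (z - x))"
      by (subst dec[symmetric]) (simp add: poly_prod_mset)
    also have "(\<Prod>x\<in>#proots P. (z - x)) = (\<Prod>x\<in>#proots P. (z - of_real (Re x)))"
      using roots by (intro arg_cong[where f = prod_mset] image_mset_cong)
         (metis complex_is_Real_iff of_real_Re)
    also have "\<dots> = (\<Prod>r\<in>#R. (z - of_real r))"
      by (simp add: R_def multiset.map_comp o_def)
    finally show ?thesis using lP by simp
  qed
  show ?thesis using that R0 ev by blast
qed

definition A :: "real multiset \<Rightarrow> complex \<Rightarrow> real" where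
  "A R z = (\<Sum>r\<in>#R. ang (z - of_real r))"

lemma prod_polar:
  assumes "Im z > 0"
  shows "\<exists>\<rho>>0. (\<Prod>r\<in>#R. (z - of_real r)) = of_real \<rho> * cis (A R z)"
proof (induction R)
  case empty
  show ?case by (rule exI[of _ 1]) (simp add: A_def)
next
  case (add r R)
  then obtain \<rho> where \<rho>: "\<rho> > 0" "(\<Prod>r\<in>#R. (z - of_real r)) = of_real \<rho> * cis (A R z)" by blast
  have im: "Im (z - of_real r) > 0" using assms by simp
  then have nz: "z - of_real r \<noteq> 0" by auto
  have pol: "z - of_real r = of_real (cmod (z - of_real r)) * cis (ang (z - of_real r))"
    by (rule ang_polar[OF im])
  have "(\<Prod>r\<in>#add_mset r R. (z - of_real r)) = (z - of_real r) * (\<Prod>r\<in>#R. (z - of_real r))"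
    by simp
  also have "\<dots> = of_real (cmod (z - of_real r) * \<rho>) * cis (A (add_mset r R) z)"
    by (subst pol, subst \<rho>(2)) (simp add: A_def cis_mult[symmetric] mult_ac)
  finally show ?case using \<rho>(1) nz by (intro exI[of _ "cmod (z - of_real r) * \<rho>"]) simp
qed

lemma A_cont: "continuous_on {z. Im z > 0} (A R)"
proof (induction R)
  case empty
  then show ?case by (simp add: A_def)
next
  case (add r R)
  have "continuous_on {z. Im z > 0} (\<lambda>z. ang (z - of_real r))"
    by (rule ang_cont) (auto intro!: continuous_intros)
  then have "continuous_on {z. Im z > 0} (\<lambda>z. ang (z - of_real r) + A R z)"
    using add by (intro continuous_on_add)
  then show ?case by (simp add: A_def)
qed

definition cnt :: "real \<Rightarrow> real multiset \<Rightarrow> int" where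
  "cnt \<tau> R = (\<Sum>r\<in>#R. if \<tau> < r then 1 else 0)"

lemma cnt_empty [simp]: "cnt \<tau> {#} = 0"
  by (simp add: cnt_def)

lemma cnt_add [simp]: "cnt \<tau> (add_mset r R) = (if \<tau> < r then 1 else 0) + cnt \<tau> R"
  by (simp add: cnt_def)

lemma cnt_nonneg: "cnt \<tau> R \<ge> 0"
  by (induction R) auto

lemma cnt_pos: assumes "r \<in># R" "\<tau> < r" shows "cnt \<tau> R \<ge> 1"
proof -
  obtain R' where "R = add_mset r R'" using multi_member_split[OF assms(1)] by blast
  then show ?thesis using assms(2) cnt_nonneg[of \<tau> R'] by simp
qed

lemma cnt_zero: "(\<And>r. r \<in># R \<Longrightarrow> r \<le> \<tau>) \<Longrightarrow> cnt \<tau> R = 0"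
  by (induction R) (auto simp: not_less)

lemma pairing:
  fixes \<psi> :: "real \<Rightarrow> real"
  assumes mono: "\<And>x y. x \<le> y \<Longrightarrow> \<psi> x \<le> \<psi> y" and nn: "\<And>x. \<psi> x \<ge> 0"
  shows "(\<And>\<tau>. cnt \<tau> F - cnt \<tau> G \<in> {0, 1}) \<Longrightarrow>
    0 \<le> (\<Sum>r\<in>#F. \<psi> r) - (\<Sum>r\<in>#G. \<psi> r) \<and>
    (F \<noteq> {#} \<longrightarrow> (\<Sum>r\<in>#F. \<psi> r) - (\<Sum>r\<in>#G. \<psi> r) \<le> \<psi> (Max_mset F)) \<and>
    (F = {#} \<longrightarrow> G = {#})"
proof (induction "size F" arbitrary: F G rule: less_induct)
  case less
  note D = less.prems
  show ?case
  proof (cases "F = {#}")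
    case True
    have G: "G = {#}"
    proof (rule ccontr)
      assume "G \<noteq> {#}"
      then obtain s where s: "s \<in># G" by blast
      have "cnt (s - 1) G \<ge> 1" using cnt_pos[OF s] by simp
      moreover have "cnt (s - 1) F = 0" using True by simp
      ultimately show False using D[of "s - 1"] by auto
    qed
    show ?thesis using True G by simp
  next
    case False
    define m where "m = Max_mset F"
    have mF: "m \<in># F" using False unfolding m_def by simp
    have mmax: "r \<le> m" if "r \<in># F" for r using that unfolding m_def by simp
    define F' where "F' = F - {#m#}"
    have Fm: "F = add_mset m F'" using mF unfolding F'_def by simp
    have hG: "s \<le> m" if s: "s \<in># G" for s
    proof (rule ccontr)
      assume "\<not> s \<le> m"
      then have "cnt m G \<ge> 1" using cnt_pos[OF s] by simp
      moreover have "cnt m F = 0" using mmax cnt_zero by blast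
      ultimately show False using D[of m] by auto
    qed
    show ?thesis
    proof (cases "G = {#}")
      case True
      have F'e: "F' = {#}"
      proof (rule ccontr)
        assume "F' \<noteq> {#}"
        then obtain r where r: "r \<in># F'" by blast
        have "cnt (min r m - 1) F' \<ge> 1" using cnt_pos[OF r] by simp
        moreover have "min r m - 1 < m" by simp
        ultimately have "cnt (min r m - 1) F \<ge> 2" unfolding Fm by (simp only: cnt_add if_True)
        then show False using D[of "min r m - 1"] True by auto
      qed
      show ?thesis using Fm F'e True nn[of m] by (simp add: m_def[symmetric])
    next
      case GF: False
      define s where "s = Max_mset G"
      have sG: "s \<in># G" using GF unfolding s_def by simp
      have smax: "r \<le> s" if "r \<in># G" for r using that unfolding s_def by simp
      have sm: "s \<le> m" using hG sG by blast
      define G' where "G' = G - {#s#}"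
      have Gs: "G = add_mset s G'" using sG unfolding G'_def by simp
      have D': "cnt \<tau> F' - cnt \<tau> G' \<in> {0, 1}" for \<tau>
      proof -
        have eF: "cnt \<tau> F = (if \<tau> < m then 1 else 0) + cnt \<tau> F'" unfolding Fm by simp
        have eG: "cnt \<tau> G = (if \<tau> < s then 1 else 0) + cnt \<tau> G'" unfolding Gs by simp
        consider "\<tau> < s" | "s \<le> \<tau>" "\<tau> < m" | "m \<le> \<tau>" by linarith
        then show ?thesis
        proof cases
          case 1 then show ?thesis using D[of \<tau>] eF eG sm by auto
        next
          case 2
          have "cnt \<tau> G = 0" using smax 2 by (intro cnt_zero) force
          moreover have "cnt \<tau> F \<ge> 1" using cnt_pos[OF mF] 2 by simp
          ultimately have "cnt \<tau> F - cnt \<tau> G = 1" using D[of \<tau>] by auto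
          then show ?thesis using eF eG 2 by auto
        next
          case 3 then show ?thesis using D[of \<tau>] eF eG sm by auto
        qed
      qed
      have szF: "size F' < size F" unfolding Fm by simp
      have IH: "0 \<le> (\<Sum>r\<in>#F'. \<psi> r) - (\<Sum>r\<in>#G'. \<psi> r) \<and>
          (F' \<noteq> {#} \<longrightarrow> (\<Sum>r\<in>#F'. \<psi> r) - (\<Sum>r\<in>#G'. \<psi> r) \<le> \<psi> (Max_mset F')) \<and>
          (F' = {#} \<longrightarrow> G' = {#})"
        using less.hyps[OF szF D'] by blast
      have SF: "(\<Sum>r\<in>#F. \<psi> r) = \<psi> m + (\<Sum>r\<in>#F'. \<psi> r)" unfolding Fm by simp
      have SG: "(\<Sum>r\<in>#G. \<psi> r) = \<psi> s + (\<Sum>r\<in>#G'. \<psi> r)" unfolding Gs by simp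
      have psm: "\<psi> s \<le> \<psi> m" using mono sm by blast
      have upper: "(\<Sum>r\<in>#F. \<psi> r) - (\<Sum>r\<in>#G. \<psi> r) \<le> \<psi> m"
      proof (cases "F' = {#}")
        case True
        then have "G' = {#}" using IH by blast
        then show ?thesis using SF SG True nn[of s] by simp
      next
        case False
        define m' where "m' = Max_mset F'"
        have m'F: "m' \<in># F'" using False unfolding m'_def by simp
        have "m' \<le> s"
        proof (rule ccontr)
          assume ms: "\<not> m' \<le> s"
          have "m' \<in># F" using m'F Fm by simp
          then have "m' \<le> m" by (rule mmax)
          then have "s < m" using ms by linarith
          moreover have "cnt s F' \<ge> 1" using cnt_pos[OF m'F] ms by simp
          ultimately have "cnt s F \<ge> 2" unfolding Fm by simp
          moreover have "cnt s G = 0" using smax by (intro cnt_zero) blast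
          ultimately show False using D[of s] by auto
        qed
        then have "\<psi> m' \<le> \<psi> s" using mono by blast
        then show ?thesis using IH False SF SG m'_def by auto
      qed
      show ?thesis using IH SF SG psm upper False by (auto simp: m_def)
    qed
  qed
qed

lemma polar_pair:
  assumes fF: "\<And>z. ev f z = of_real cf * (\<Prod>r\<in>#Rf. (z - of_real r))" and cf: "cf > 0"
    and gF: "\<And>z. ev g z = of_real cg * (\<Prod>r\<in>#Rg. (z - of_real r))" and cg: "cg > 0"
    and z: "Im z > 0"
  shows "\<exists>\<rho>>0. ev f z * cnj (ev g z) = of_real \<rho> * cis (A Rf z - A Rg z)"
proof -
  obtain \<rho>f where rf: "\<rho>f > 0" "(\<Prod>r\<in>#Rf. (z - of_real r)) = of_real \<rho>f * cis (A Rf z)"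
    using prod_polar[OF z] by blast
  obtain \<rho>g where rg: "\<rho>g > 0" "(\<Prod>r\<in>#Rg. (z - of_real r)) = of_real \<rho>g * cis (A Rg z)"
    using prod_polar[OF z] by blast
  have "ev f z * cnj (ev g z) = of_real (cf * \<rho>f * cg * \<rho>g) * (cis (A Rf z) * cis (- A Rg z))"
    by (simp add: fF gF rf(2) rg(2) cis_cnj mult_ac)
  also have "\<dots> = of_real (cf * \<rho>f * cg * \<rho>g) * cis (A Rf z - A Rg z)"
    by (simp add: cis_mult)
  finally show ?thesis using cf cg rf(1) rg(1) by (intro exI[of _ "cf * \<rho>f * cg * \<rho>g"]) simp
qed

lemma neg_real_zero:
  assumes "F * cnj G = - of_real \<rho>" "\<rho> > 0" "G \<noteq> 0"
  shows "\<exists>t>0. F + of_real t * G = 0"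
proof -
  define t where "t = \<rho> / (cmod G)\<^sup>2"
  have t: "t > 0" unfolding t_def using assms by simp
  have "F * (cnj G * G) = - of_real \<rho> * G" using assms(1) by (metis mult.assoc)
  moreover have "cnj G * G = of_real ((cmod G)\<^sup>2)"
    by (simp only: complex_norm_square mult.commute)
  ultimately have "F * of_real ((cmod G)\<^sup>2) = - of_real \<rho> * G"
    by simp
  then have "F = - of_real t * G" unfolding t_def using assms(3)
    by (simp add: field_simps)
  then show ?thesis using t by (intro exI[of _ t]) simp
qed

lemma A_bounds:
  assumes "\<And>r. r \<in># R \<Longrightarrow> ang (z - of_real r) \<le> B"
  shows "0 \<le> A R z \<and> A R z \<le> real (size R) * B"
  using assms
proof (induction R)
  case empty then show ?case by (simp add: A_def)
next
  case (add r R)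
  have "ang (z - of_real r) \<le> B" "0 < ang (z - of_real r)" using add.prems ang_bounds by auto
  moreover have "0 \<le> A R z \<and> A R z \<le> real (size R) * B" using add by auto
  ultimately show ?case by (simp add: A_def algebra_simps)
qed

lemma A_approx:
  assumes "\<And>r. r \<in># R \<Longrightarrow> \<bar>ang (z - of_real r) - pi * (if \<tau> < r then 1 else 0)\<bar> \<le> B"
  shows "\<bar>A R z - pi * of_int (cnt \<tau> R)\<bar> \<le> real (size R) * B"
  using assms
proof (induction R)
  case empty then show ?case by (simp add: A_def)
next
  case (add r R)
  have a: "\<bar>ang (z - of_real r) - pi * (if \<tau> < r then 1 else 0)\<bar> \<le> B" using add.prems by auto
  have b: "\<bar>A R z - pi * of_int (cnt \<tau> R)\<bar> \<le> real (size R) * B" using add by auto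
  have "A (add_mset r R) z - pi * of_int (cnt \<tau> (add_mset r R)) =
     (ang (z - of_real r) - pi * (if \<tau> < r then 1 else 0)) + (A R z - pi * of_int (cnt \<tau> R))"
    by (simp add: A_def algebra_simps)
  then show ?case using a b by (simp add: algebra_simps)
qed

lemma cnt_cong: "(\<And>r. r \<in># R \<Longrightarrow> (\<tau> < r) = (\<tau>' < r)) \<Longrightarrow> cnt \<tau> R = cnt \<tau>' R"
  by (induction R) auto

locale CC =
  fixes f g :: "real poly" and Rf Rg :: "real multiset"
  assumes NNf: "NN f" and NNg: "NN g" and fz: "f \<noteq> 0" and gz: "g \<noteq> 0"
    and fam1: "\<And>t. t > 0 \<Longrightarrow> NN (f + smult t g)"
    and fam2: "\<And>t. t > 0 \<Longrightarrow> NN (f + smult t ([:0,1:] * g))"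
    and Rf0: "\<forall>r\<in>#Rf. r \<le> 0" and Rg0: "\<forall>r\<in>#Rg. r \<le> 0"
    and fF: "\<And>z. ev f z = of_real (lead_coeff f) * (\<Prod>r\<in>#Rf. (z - of_real r))"
    and gF: "\<And>z. ev g z = of_real (lead_coeff g) * (\<Prod>r\<in>#Rg. (z - of_real r))"
begin

lemma pp: "Im z > 0 \<Longrightarrow> \<exists>\<rho>>0. ev f z * cnj (ev g z) = of_real \<rho> * cis (A Rf z - A Rg z)"
  by (rule polar_pair[OF fF NN_lead[OF NNf fz] gF NN_lead[OF NNg gz]])

lemma K1: assumes z: "Im z > 0" shows "A Rf z - A Rg z \<noteq> pi"
proof
  assume eq: "A Rf z - A Rg z = pi"
  obtain \<rho> where \<rho>: "\<rho> > 0" "ev f z * cnj (ev g z) = of_real \<rho> * cis (A Rf z - A Rg z)"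
    using pp[OF z] by blast
  then have "ev f z * cnj (ev g z) = - of_real \<rho>" using eq by simp
  moreover have "ev g z \<noteq> 0" using NN_UHP[OF NNg gz] z by simp
  ultimately obtain t where t: "t > 0" "ev f z + of_real t * ev g z = 0"
    using neg_real_zero \<rho>(1) by blast
  then have "ev (f + smult t g) z = 0" by simp
  moreover have "f + smult t g \<noteq> 0" using family_nz[OF fam1 fz t(1)] .
  ultimately show False using NN_UHP[OF fam1[OF t(1)]] z by fastforce
qed

lemma K2: assumes z: "Im z > 0" shows "A Rf z - A Rg z \<noteq> ang z - pi"
proof
  assume eq: "A Rf z - A Rg z = ang z - pi"
  obtain \<rho> where \<rho>: "\<rho> > 0" "ev f z * cnj (ev g z) = of_real \<rho> * cis (A Rf z - A Rg z)"
    using pp[OF z] by blast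
  have zp: "z = of_real (cmod z) * cis (ang z)" by (rule ang_polar[OF z])
  have zn: "cmod z > 0" using z by (metis less_irrefl zero_complex.sel(2) zero_less_norm_iff)
  have "ev f z * cnj (z * ev g z) = cnj z * (ev f z * cnj (ev g z))" by (simp add: mult_ac)
  also have "\<dots> = of_real (cmod z * \<rho>) * (cis (- ang z) * cis (A Rf z - A Rg z))"
    by (subst zp, subst \<rho>(2)) (simp add: cis_cnj mult_ac)
  also have "\<dots> = - of_real (cmod z * \<rho>)"
  proof -
    have "cis (- ang z) * cis (A Rf z - A Rg z) = cis (- pi)" using eq by (simp add: cis_mult)
    also have "\<dots> = -1" by (simp add: complex_eq_iff)
    finally show ?thesis by simp
  qed
  finally have neg: "ev f z * cnj (z * ev g z) = - of_real (cmod z * \<rho>)" .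
  have "ev g z \<noteq> 0" using NN_UHP[OF NNg gz] z by simp
  moreover have "z \<noteq> 0" using z by auto
  ultimately have "z * ev g z \<noteq> 0" by simp
  then obtain t where t: "t > 0" "ev f z + of_real t * (z * ev g z) = 0"
    using neg_real_zero[OF neg] zn \<rho>(1) by auto
  then have "ev (f + smult t ([:0,1:] * g)) z = 0" by (simp add: mult.left_commute)
  moreover have "f + smult t ([:0,1:] * g) \<noteq> 0" using family_nz[OF fam2 fz t(1)] .
  ultimately show False using NN_UHP[OF fam2[OF t(1)]] z by fastforce
qed

lemma Bnd:
  assumes z: "Im z > 0"
  shows "ang z - pi < A Rf z - A Rg z \<and> A Rf z - A Rg z < pi"
proof -
  define n where "n = size Rf + size Rg"
  define \<epsilon> where "\<epsilon> = 1 / (real n + 2)"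
  have \<epsilon>0: "\<epsilon> > 0" unfolding \<epsilon>_def by simp
  have n\<epsilon>: "(real n + 1) * \<epsilon> < 1" unfolding \<epsilon>_def by (simp add: field_simps)
  define z0 where "z0 = Complex 1 \<epsilon>"
  have small: "ang (z0 - of_real r) \<le> \<epsilon>" if "r \<le> 0" for r
  proof -
    have "z0 - of_real r = Complex (1 - r) \<epsilon>" by (simp add: z0_def complex_eq_iff)
    then have "ang (z0 - of_real r) \<le> \<epsilon> / (1 - r)" using ang_small[of "1 - r" \<epsilon>] that \<epsilon>0 by simp
    also have "\<dots> \<le> \<epsilon>" using that \<epsilon>0 by (simp add: divide_le_eq)
    finally show ?thesis .
  qed
  have bf: "0 \<le> A Rf z0 \<and> A Rf z0 \<le> real (size Rf) * \<epsilon>" using small Rf0 by (intro A_bounds) auto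
  have bg: "0 \<le> A Rg z0 \<and> A Rg z0 \<le> real (size Rg) * \<epsilon>" using small Rg0 by (intro A_bounds) auto
  have az0: "ang z0 \<le> \<epsilon>" using small[of 0] by simp
  have u0: "A Rf z0 - A Rg z0 < pi"
  proof -
    have "A Rf z0 - A Rg z0 \<le> real n * \<epsilon>" using bf bg \<epsilon>0 unfolding n_def by (simp add: algebra_simps)
    also have "\<dots> < 1" using n\<epsilon> \<epsilon>0 by (simp add: algebra_simps)
    also have "1 < pi" using pi_gt3 by simp
    finally show ?thesis .
  qed
  have v0: "ang z0 - pi < A Rf z0 - A Rg z0"
  proof -
    have "- (real n * \<epsilon>) \<le> A Rf z0 - A Rg z0" using bf bg \<epsilon>0 unfolding n_def by (simp add: algebra_simps)
    moreover have "ang z0 - pi < - (real n * \<epsilon>)" using az0 n\<epsilon> pi_gt3 by (simp add: algebra_simps)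
    ultimately show ?thesis by simp
  qed
  define \<gamma> where "\<gamma> = (\<lambda>t::real. z0 + of_real t * (z - z0))"
  have im\<gamma>: "Im (\<gamma> t) > 0" if "t \<in> {0..1}" for t
  proof -
    have "Im (\<gamma> t) = (1 - t) * \<epsilon> + t * Im z" by (simp add: \<gamma>_def z0_def algebra_simps)
    moreover have "(1 - t) * \<epsilon> \<ge> 0" "t * Im z \<ge> 0" using that \<epsilon>0 z by auto
    moreover have "(1 - t) * \<epsilon> > 0 \<or> t * Im z > 0" using that \<epsilon>0 z by (cases "t = 1") auto
    ultimately show ?thesis by linarith
  qed
  have c\<gamma>: "continuous_on {0..1} \<gamma>" unfolding \<gamma>_def by (intro continuous_intros)
  have \<gamma>im: "\<gamma> ` {0..1} \<subseteq> {z. Im z > 0}" using im\<gamma> by auto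
  have ca: "continuous_on {0..1} (\<lambda>t. A Rf (\<gamma> t) - A Rg (\<gamma> t))"
    by (intro continuous_on_diff continuous_on_compose2[OF A_cont c\<gamma> \<gamma>im])
  have cang: "continuous_on {0..1} (\<lambda>t. ang (\<gamma> t))"
    by (rule ang_cont[OF c\<gamma>]) (use im\<gamma> in force)
  have g0: "\<gamma> 0 = z0" and g1: "\<gamma> 1 = z" by (simp_all add: \<gamma>_def)
  have up: "A Rf z - A Rg z < pi"
  proof (rule ccontr)
    assume "\<not> A Rf z - A Rg z < pi"
    then have "pi - (A Rf (\<gamma> 1) - A Rg (\<gamma> 1)) \<le> 0" using g1 by simp
    moreover have "0 \<le> pi - (A Rf (\<gamma> 0) - A Rg (\<gamma> 0))" using u0 g0 by simp
    moreover have "continuous_on {0..1} (\<lambda>t. pi - (A Rf (\<gamma> t) - A Rg (\<gamma> t)))"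
      by (intro continuous_on_diff continuous_on_const ca)
    ultimately obtain t where t: "0 \<le> t" "t \<le> 1" "pi - (A Rf (\<gamma> t) - A Rg (\<gamma> t)) = 0"
      using IVT2'[of "\<lambda>t. pi - (A Rf (\<gamma> t) - A Rg (\<gamma> t))" 1 0 0] by auto
    then show False using K1[OF im\<gamma>[of t]] by auto
  qed
  have lo: "ang z - pi < A Rf z - A Rg z"
  proof (rule ccontr)
    assume "\<not> ang z - pi < A Rf z - A Rg z"
    then have "(A Rf (\<gamma> 1) - A Rg (\<gamma> 1)) - ang (\<gamma> 1) + pi \<le> 0" using g1 by simp
    moreover have "0 \<le> (A Rf (\<gamma> 0) - A Rg (\<gamma> 0)) - ang (\<gamma> 0) + pi" using v0 g0 by simp
    moreover have "continuous_on {0..1} (\<lambda>t. (A Rf (\<gamma> t) - A Rg (\<gamma> t)) - ang (\<gamma> t) + pi)"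
      by (intro continuous_on_add continuous_on_diff continuous_on_const ca cang)
    ultimately obtain t where t: "0 \<le> t" "t \<le> 1" "(A Rf (\<gamma> t) - A Rg (\<gamma> t)) - ang (\<gamma> t) + pi = 0"
      using IVT2'[of "\<lambda>t. (A Rf (\<gamma> t) - A Rg (\<gamma> t)) - ang (\<gamma> t) + pi" 1 0 0] by auto
    then show False using K2[OF im\<gamma>[of t]] by auto
  qed
  show ?thesis using up lo by simp
qed

lemma Dnr:
  assumes \<tau>: "\<tau> < 0" and nf: "\<not> \<tau> \<in># Rf" and ng: "\<not> \<tau> \<in># Rg"
  shows "cnt \<tau> Rf - cnt \<tau> Rg \<in> {0, 1}"
proof -
  define Z where "Z = set_mset Rf \<union> set_mset Rg \<union> {0}"
  have finZ: "finite Z" unfolding Z_def by simp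
  have tZ: "\<tau> \<notin> Z" using nf ng \<tau> unfolding Z_def by auto
  define \<delta> where "\<delta> = Min ((\<lambda>r. \<bar>\<tau> - r\<bar>) ` Z)"
  have \<delta>0: "\<delta> > 0" unfolding \<delta>_def using finZ tZ by (subst Min_gr_iff) (auto simp: Z_def)
  have \<delta>le: "\<delta> \<le> \<bar>\<tau> - r\<bar>" if "r \<in> Z" for r unfolding \<delta>_def using finZ that by simp
  define n where "n = size Rf + size Rg"
  define \<epsilon> where "\<epsilon> = \<delta> / (2 * (real n + 1))"
  have \<epsilon>0: "\<epsilon> > 0" unfolding \<epsilon>_def using \<delta>0 by simp
  define e where "e = \<epsilon> / \<delta>"
  have e: "(real n + 1) * e = 1/2"
  proof -
    have "e = 1 / (2 * (real n + 1))" unfolding e_def \<epsilon>_def using \<delta>0 by simp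
    then show ?thesis by simp
  qed
  have e0: "e > 0" unfolding e_def using \<epsilon>0 \<delta>0 by simp
  define z where "z = Complex \<tau> \<epsilon>"
  have zi: "Im z > 0" using \<epsilon>0 by (simp add: z_def)
  have per: "\<bar>ang (z - of_real r) - pi * (if \<tau> < r then 1 else 0)\<bar> \<le> e" if r: "r \<in> Z" for r
  proof -
    have zr: "z - of_real r = Complex (\<tau> - r) \<epsilon>" by (simp add: z_def complex_eq_iff)
    have d: "\<delta> \<le> \<bar>\<tau> - r\<bar>" using \<delta>le r .
    have rt: "r \<noteq> \<tau>" using tZ r by auto
    show ?thesis
    proof (cases "\<tau> < r")
      case True
      have "ang (z - of_real r) \<ge> pi - \<epsilon> / (r - \<tau>)"
        using ang_big[of "\<tau> - r" \<epsilon>] True \<epsilon>0 zr by simp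
      moreover have "\<epsilon> / (r - \<tau>) \<le> e" unfolding e_def
        using d True \<delta>0 \<epsilon>0 by (intro divide_left_mono) auto
      moreover have "ang (z - of_real r) < pi" by (rule ang_bounds)
      ultimately show ?thesis using True by simp
    next
      case False
      then have tr: "r < \<tau>" using rt by simp
      have "ang (z - of_real r) \<le> \<epsilon> / (\<tau> - r)"
        using ang_small[of "\<tau> - r" \<epsilon>] tr \<epsilon>0 zr by simp
      moreover have "\<epsilon> / (\<tau> - r) \<le> e" unfolding e_def
        using d tr \<delta>0 \<epsilon>0 by (intro divide_left_mono) auto
      moreover have "ang (z - of_real r) > 0" by (rule ang_bounds)
      ultimately show ?thesis using False by simp
    qed
  qed
  have af: "\<bar>A Rf z - pi * of_int (cnt \<tau> Rf)\<bar> \<le> real (size Rf) * e"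
    by (rule A_approx) (use per in \<open>auto simp: Z_def\<close>)
  have ag: "\<bar>A Rg z - pi * of_int (cnt \<tau> Rg)\<bar> \<le> real (size Rg) * e"
    by (rule A_approx) (use per in \<open>auto simp: Z_def\<close>)
  have az: "ang z \<ge> pi - e"
  proof -
    have "ang z \<ge> pi - \<epsilon> / (- \<tau>)" using ang_big[of \<tau> \<epsilon>] \<tau> \<epsilon>0 by (simp add: z_def)
    moreover have "\<epsilon> / (- \<tau>) \<le> e" unfolding e_def
      using \<delta>le[of 0] assms(1) \<delta>0 \<epsilon>0 by (intro divide_left_mono) (auto simp: Z_def mult_neg_pos)
    ultimately show ?thesis by simp
  qed
  define D where "D = cnt \<tau> Rf - cnt \<tau> Rg"
  have close: "\<bar>(A Rf z - A Rg z) - pi * of_int D\<bar> \<le> real n * e"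
    using af ag unfolding D_def n_def by (simp add: algebra_simps)
  have B: "ang z - pi < A Rf z - A Rg z \<and> A Rf z - A Rg z < pi" by (rule Bnd[OF zi])
  have ne: "real n * e \<le> 1/2 - e" using e by (simp add: algebra_simps)
  have up: "pi * of_int D < pi + 1/2" using close B ne e0 by linarith
  have lo: "pi * of_int D > - 1/2" using close B ne az by linarith
  have "D \<le> 1"
  proof (rule ccontr)
    assume "\<not> D \<le> 1"
    then have "of_int D \<ge> (2::real)" by simp
    then have "pi * of_int D \<ge> pi * 2" using pi_gt3 by (intro mult_left_mono) auto
    then show False using up pi_gt3 by linarith
  qed
  moreover have "D \<ge> 0"
  proof (rule ccontr)
    assume "\<not> D \<ge> 0"
    then have "of_int D \<le> (-1::real)" by simp
    then have "pi * of_int D \<le> pi * (-1)" using pi_gt3 by (intro mult_left_mono) auto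
    then show False using lo pi_gt3 by linarith
  qed
  ultimately show ?thesis unfolding D_def by auto
qed

lemma Dall: "cnt \<tau> Rf - cnt \<tau> Rg \<in> {0, 1}"
proof (cases "\<tau> < 0")
  case False
  have "cnt \<tau> Rf = 0" using Rf0 False by (intro cnt_zero) force
  moreover have "cnt \<tau> Rg = 0" using Rg0 False by (intro cnt_zero) force
  ultimately show ?thesis by simp
next
  case True
  define Z where "Z = {r \<in> set_mset Rf \<union> set_mset Rg \<union> {0}. \<tau> < r}"
  have finZ: "finite Z" unfolding Z_def by simp
  have Zne: "0 \<in> Z" using True unfolding Z_def by simp
  define m where "m = Min Z"
  have mZ: "m \<in> Z" unfolding m_def using finZ Zne by (intro Min_in) auto
  have tm: "\<tau> < m" using mZ unfolding Z_def by simp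
  have m0: "m \<le> 0" unfolding m_def using finZ Zne by simp
  define \<tau>' where "\<tau>' = (\<tau> + m) / 2"
  have t1: "\<tau> < \<tau>'" "\<tau>' < m" using tm unfolding \<tau>'_def by simp_all
  have iff: "(\<tau> < r) = (\<tau>' < r)" if "r \<in> set_mset Rf \<union> set_mset Rg" for r
  proof
    assume "\<tau> < r"
    then have "r \<in> Z" using that unfolding Z_def by simp
    then have "m \<le> r" unfolding m_def using finZ by simp
    then show "\<tau>' < r" using t1 by simp
  next
    assume "\<tau>' < r" then show "\<tau> < r" using t1 by simp
  qed
  have nr: "\<not> \<tau>' \<in># Rf" "\<not> \<tau>' \<in># Rg" using iff t1 by fastforce+
  have "cnt \<tau> Rf = cnt \<tau>' Rf" by (rule cnt_cong) (use iff in auto)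
  moreover have "cnt \<tau> Rg = cnt \<tau>' Rg" by (rule cnt_cong) (use iff in auto)
  moreover have "cnt \<tau>' Rf - cnt \<tau>' Rg \<in> {0, 1}" using Dnr[OF _ nr] t1 m0 by simp
  ultimately show ?thesis by simp
qed

lemma Fin:
  assumes z: "Im z > 0"
  shows "0 \<le> A Rf z - A Rg z \<and> A Rf z - A Rg z \<le> ang z"
proof -
  define \<psi> where "\<psi> = (\<lambda>r. ang (z - of_real r))"
  have mono: "\<psi> x \<le> \<psi> y" if "x \<le> y" for x y unfolding \<psi>_def by (rule ang_mono[OF z that])
  have nn: "\<psi> x \<ge> 0" for x unfolding \<psi>_def using ang_bounds(1) less_imp_le by blast
  have P: "0 \<le> (\<Sum>r\<in>#Rf. \<psi> r) - (\<Sum>r\<in>#Rg. \<psi> r) \<and>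
    (Rf \<noteq> {#} \<longrightarrow> (\<Sum>r\<in>#Rf. \<psi> r) - (\<Sum>r\<in>#Rg. \<psi> r) \<le> \<psi> (Max_mset Rf)) \<and>
    (Rf = {#} \<longrightarrow> Rg = {#})"
    using pairing[of \<psi> Rf Rg] mono nn Dall by blast
  have sums: "(\<Sum>r\<in>#Rf. \<psi> r) = A Rf z" "(\<Sum>r\<in>#Rg. \<psi> r) = A Rg z" by (simp_all add: A_def \<psi>_def)
  have "A Rf z - A Rg z \<le> ang z"
  proof (cases "Rf = {#}")
    case True
    then show ?thesis using P ang_bounds[of z] by (simp add: A_def)
  next
    case False
    have "Max_mset Rf \<le> 0" using False Rf0 by simp
    then have "\<psi> (Max_mset Rf) \<le> \<psi> 0" by (rule mono)
    then show ?thesis using P False sums by (simp add: \<psi>_def)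
  qed
  then show ?thesis using P sums by simp
qed

end

lemma claimC:
  assumes NNf: "NN f" and NNg: "NN g" and fam1: "\<And>t. t > 0 \<Longrightarrow> NN (f + smult t g)"
    and fam2: "\<And>t. t > 0 \<Longrightarrow> NN (f + smult t ([:0,1:] * g))"
  shows "ImC f g \<and> ImC ([:0,1:] * g) f"
proof (cases "f = 0 \<or> g = 0")
  case True
  then show ?thesis by (auto simp: ImC_def)
next
  case False
  then have fz: "f \<noteq> 0" and gz: "g \<noteq> 0" by auto
  obtain Rf where Rf: "\<forall>r\<in>#Rf. r \<le> 0" "\<And>z. ev f z = of_real (lead_coeff f) * (\<Prod>r\<in>#Rf. (z - of_real r))"
    using NN_factor[OF NNf fz] by blast
  obtain Rg where Rg: "\<forall>r\<in>#Rg. r \<le> 0" "\<And>z. ev g z = of_real (lead_coeff g) * (\<Prod>r\<in>#Rg. (z - of_real r))"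
    using NN_factor[OF NNg gz] by blast
  interpret CC f g Rf Rg
    by (unfold_locales) (use NNf NNg fz gz fam1 fam2 Rf Rg in auto)
  note Fn = Fin
  note Pp = pp
  have I1: "Im (ev f z * cnj (ev g z)) \<ge> 0 \<and> Im (ev ([:0,1:] * g) z * cnj (ev f z)) \<ge> 0"
    if z: "Im z > 0" for z
  proof -
    define a where "a = A Rf z - A Rg z"
    obtain \<rho> where \<rho>: "\<rho> > 0" "ev f z * cnj (ev g z) = of_real \<rho> * cis a"
      using Pp[OF z] unfolding a_def by blast
    have a: "0 \<le> a" "a \<le> ang z" using Fn[OF z] unfolding a_def by auto
    have az: "ang z < pi" by (rule ang_bounds)
    have "Im (ev f z * cnj (ev g z)) = \<rho> * sin a" using \<rho>(2) by simp
    moreover have "sin a \<ge> 0" using a az by (intro sin_ge_zero) auto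
    ultimately have i1: "Im (ev f z * cnj (ev g z)) \<ge> 0" using \<rho>(1) by simp
    have zp: "z = of_real (cmod z) * cis (ang z)" by (rule ang_polar[OF z])
    have "ev ([:0,1:] * g) z * cnj (ev f z) = z * cnj (ev f z * cnj (ev g z))" by simp
    also have "\<dots> = of_real (cmod z * \<rho>) * (cis (ang z) * cis (- a))"
      by (subst zp, subst \<rho>(2)) (simp add: cis_cnj mult_ac)
    also have "\<dots> = of_real (cmod z * \<rho>) * cis (ang z - a)" by (simp add: cis_mult)
    finally have "Im (ev ([:0,1:] * g) z * cnj (ev f z)) = cmod z * \<rho> * sin (ang z - a)" by simp
    moreover have "sin (ang z - a) \<ge> 0" using a az by (intro sin_ge_zero) auto
    ultimately have i2: "Im (ev ([:0,1:] * g) z * cnj (ev f z)) \<ge> 0" using \<rho>(1) by simp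
    show ?thesis using i1 i2 by simp
  qed
  then show ?thesis by (simp add: ImC_def)
qed

lemma face_lemma:
  fixes a b c d :: "real poly"
  assumes H: "\<And>e1 e2 l1 r1 l2 r2. l1 > 0 \<Longrightarrow> r1 > 0 \<Longrightarrow> l2 > 0 \<Longrightarrow> r2 > 0 \<Longrightarrow>
       NN (g2 e1 l1 r1 (g2 e2 l2 r2 a b) (g2 e2 l2 r2 c d))"
    and l: "l > 0" and r: "r > 0"
  shows "NN (g2 e l r (a + [:0,1:] * d) (b + c))"
proof -
  let ?X = "[:0,1:] :: real poly"
  have fab: "NN (a + smult t b)" if t: "t > 0" for t
  proof (rule HL[where B = "c + smult t d"])
    fix s :: real assume s: "s > 0"
    have "g2 False s 1 (g2 False t 1 a b) (g2 False t 1 c d) = a + smult t b + smult s (c + smult t d)"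
      by (simp add: g2_def algebra_simps smult_add_right)
    then show "NN (a + smult t b + smult s (c + smult t d))" using H[of s 1 t 1 False False] s t by simp
  qed
  have faXb: "NN (a + smult t (?X * b))" if t: "t > 0" for t
  proof (rule HL[where B = "c + smult t (?X * d)"])
    fix s :: real assume s: "s > 0"
    have "g2 False s 1 (g2 True 1 t a b) (g2 True 1 t c d) = a + smult t (?X * b) + smult s (c + smult t (?X * d))"
      by (simp add: g2_def algebra_simps smult_add_right)
    then show "NN (a + smult t (?X * b) + smult s (c + smult t (?X * d)))" using H[of s 1 1 t False True] s t by simp
  qed
  have fcd: "NN (c + smult t d)" if t: "t > 0" for t
  proof (rule HL[where B = "a + smult t b"])
    fix s :: real assume s: "s > 0"
    have "g2 False 1 s (g2 False t 1 a b) (g2 False t 1 c d) = c + smult t d + smult s (a + smult t b)"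
      by (simp add: g2_def algebra_simps smult_add_right)
    then show "NN (c + smult t d + smult s (a + smult t b))" using H[of 1 s t 1 False False] s t by simp
  qed
  have fcXd: "NN (c + smult t (?X * d))" if t: "t > 0" for t
  proof (rule HL[where B = "a + smult t (?X * b)"])
    fix s :: real assume s: "s > 0"
    have "g2 False 1 s (g2 True 1 t a b) (g2 True 1 t c d) = c + smult t (?X * d) + smult s (a + smult t (?X * b))"
      by (simp add: g2_def algebra_simps smult_add_right)
    then show "NN (c + smult t (?X * d) + smult s (a + smult t (?X * b)))" using H[of 1 s 1 t False True] s t by simp
  qed
  have fac: "NN (a + smult t c)" if t: "t > 0" for t
  proof (rule HL[where B = "b + smult t d"])
    fix s :: real assume s: "s > 0"
    have "g2 False t 1 (g2 False s 1 a b) (g2 False s 1 c d) = a + smult t c + smult s (b + smult t d)"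
      by (simp add: g2_def algebra_simps smult_add_right)
    then show "NN (a + smult t c + smult s (b + smult t d))" using H[of t 1 s 1 False False] s t by simp
  qed
  have faXc: "NN (a + smult t (?X * c))" if t: "t > 0" for t
  proof (rule HL[where B = "b + smult t (?X * d)"])
    fix s :: real assume s: "s > 0"
    have "g2 True 1 t (g2 False s 1 a b) (g2 False s 1 c d) = a + smult t (?X * c) + smult s (b + smult t (?X * d))"
      by (simp add: g2_def algebra_simps smult_add_right)
    then show "NN (a + smult t (?X * c) + smult s (b + smult t (?X * d)))" using H[of 1 t s 1 True False] s t by simp
  qed
  have fbd: "NN (b + smult t d)" if t: "t > 0" for t
  proof (rule HL[where B = "a + smult t c"])
    fix s :: real assume s: "s > 0"
    have "g2 False t 1 (g2 False 1 s a b) (g2 False 1 s c d) = b + smult t d + smult s (a + smult t c)"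
      by (simp add: g2_def algebra_simps smult_add_right)
    then show "NN (b + smult t d + smult s (a + smult t c))" using H[of t 1 1 s False False] s t by simp
  qed
  have fbXd: "NN (b + smult t (?X * d))" if t: "t > 0" for t
  proof (rule HL[where B = "a + smult t (?X * c)"])
    fix s :: real assume s: "s > 0"
    have "g2 True 1 t (g2 False 1 s a b) (g2 False 1 s c d) = b + smult t (?X * d) + smult s (a + smult t (?X * c))"
      by (simp add: g2_def algebra_simps smult_add_right)
    then show "NN (b + smult t (?X * d) + smult s (a + smult t (?X * c)))" using H[of 1 t 1 s True False] s t by simp
  qed
  have NNa: "NN a" by (rule HL[where B = b]) (rule fab)
  have NNb: "NN b" by (rule HL[where B = d]) (rule fbd)
  have NNc: "NN c" by (rule HL[where B = d]) (rule fcd)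
  have NNd: "NN d"
  proof (rule HL[where B = b])
    fix s :: real assume s: "s > 0"
    have "NN (smult s (b + smult (1/s) d))" using NN_smult fbd s by simp
    moreover have "smult s (b + smult (1/s) d) = d + smult s b" using s by (simp add: smult_add_right)
    ultimately show "NN (d + smult s b)" by simp
  qed
  have Cab: "ImC a b \<and> ImC (?X * b) a" by (rule claimC[OF NNa NNb fab faXb])
  have Cac: "ImC a c \<and> ImC (?X * c) a" by (rule claimC[OF NNa NNc fac faXc])
  have Cbd: "ImC b d \<and> ImC (?X * d) b" by (rule claimC[OF NNb NNd fbd fbXd])
  have Ccd: "ImC c d \<and> ImC (?X * d) c" by (rule claimC[OF NNc NNd fcd fcXd])
  define q0 where "q0 = a + ?X * d"
  define q1 where "q1 = b + c"
  have stq1: "standard q1" unfolding q1_def using NNb NNc by (intro standard_add) (auto simp: NN_def)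
  have stq0: "standard q0" unfolding q0_def using NNa NNd by (intro standard_add standard_X) (auto simp: NN_def)
  have posq1: "poly q1 x > 0" if "x > 0" "q1 \<noteq> 0" for x
  proof -
    have "b \<noteq> 0 \<or> c \<noteq> 0" using that q1_def by auto
    then have "poly b x > 0 \<or> poly c x > 0" using NN_pos NNb NNc that by blast
    moreover have "poly b x \<ge> 0" "poly c x \<ge> 0" using NN_nonneg NNb NNc that by auto
    ultimately show ?thesis unfolding q1_def by auto
  qed
  have posq0: "poly q0 x > 0" if "x > 0" "q0 \<noteq> 0" for x
  proof -
    have "a \<noteq> 0 \<or> d \<noteq> 0" using that q0_def by auto
    then have "poly a x > 0 \<or> poly d x > 0" using NN_pos NNa NNd that by blast
    moreover have "poly a x \<ge> 0" "poly d x \<ge> 0" using NN_nonneg NNa NNd that by auto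
    ultimately show ?thesis unfolding q0_def using that(1) by (auto simp: add_pos_nonneg add_nonneg_pos)
  qed
  have NNq1: "NN q1"
  proof (cases "a \<noteq> 0")
    case True
    have "ImC a q1" unfolding q1_def by (rule ImC_add_right) (use Cab Cac in auto)
    then show ?thesis using lemmaRef[OF NNa True stq1] posq1 by blast
  next
    case False
    show ?thesis
    proof (cases "d \<noteq> 0")
      case True
      then have "?X * d \<noteq> 0" by simp
      have "ImC (?X * d) q1" unfolding q1_def by (rule ImC_add_right) (use Cbd Ccd in auto)
      then show ?thesis using lemmaRef[OF NN_X[OF NNd] \<open>?X * d \<noteq> 0\<close> stq1] posq1 by blast
    next
      case False
      have "g2 False 1 1 (g2 False 1 1 a b) (g2 False 1 1 c d) = q1"
        using \<open>\<not> a \<noteq> 0\<close> False by (simp add: g2_def q1_def algebra_simps)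
      then show ?thesis using H[of 1 1 1 1 False False] by simp
    qed
  qed
  have NNq0: "NN q0"
  proof (cases "b \<noteq> 0")
    case True
    then have "?X * b \<noteq> 0" by simp
    have "ImC (?X * b) q0" unfolding q0_def
      using ImC_add_right[of "?X * b" a "?X * d"] Cab ImC_XX[of b d] Cbd by blast
    then show ?thesis using lemmaRef[OF NN_X[OF NNb] \<open>?X * b \<noteq> 0\<close> stq0] posq0 by blast
  next
    case False
    show ?thesis
    proof (cases "c \<noteq> 0")
      case True
      then have "?X * c \<noteq> 0" by simp
      have "ImC (?X * c) q0" unfolding q0_def
        using ImC_add_right[of "?X * c" a "?X * d"] Cac ImC_XX[of c d] Ccd by blast
      then show ?thesis using lemmaRef[OF NN_X[OF NNc] \<open>?X * c \<noteq> 0\<close> stq0] posq0 by blast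
    next
      case False
      have "g2 True 1 1 (g2 False 1 1 a b) (g2 False 1 1 c d) = q0"
        using \<open>\<not> b \<noteq> 0\<close> False by (simp add: g2_def q0_def algebra_simps)
      then show ?thesis using H[of 1 1 1 1 True False] by simp
    qed
  qed
  have I1: "ImC q0 q1"
    unfolding q0_def q1_def
    by (intro ImC_add_left ImC_add_right) (use Cab Cac Cbd Ccd in auto)
  have I2: "ImC (?X * q1) q0"
  proof -
    have "?X * q1 = ?X * b + ?X * c" by (simp add: q1_def distrib_left)
    then show ?thesis unfolding q0_def
      by (simp only:) (intro ImC_add_left ImC_add_right ImC_XX; use Cab Cac Cbd Ccd in auto)
  qed
  show ?thesis
  proof (cases e)
    case True
    have "NN (smult r (?X * q1) + smult l q0)" by (rule lemmaB[OF NN_X[OF NNq1] NNq0 I2 r l])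
    then show ?thesis using True by (simp add: g2_def q0_def q1_def add.commute)
  next
    case False
    have "NN (smult r q0 + smult l q1)" by (rule lemmaB[OF NNq0 NNq1 I1 r l])
    then show ?thesis using False by (simp add: g2_def q0_def q1_def add.commute)
  qed
qed

theorem lemma4p9:
  fixes k :: nat and P :: cube
  assumes "k \<ge> 2"
    and "\<exists>\<beta>. length \<beta> = k - 2 \<and> (P (False # False # \<beta>) \<noteq> 0 \<or> P (True # True # \<beta>) \<noteq> 0)"
    and "\<exists>\<gamma>. length \<gamma> = k - 2 \<and> (P (False # True # \<gamma>) \<noteq> 0 \<or> P (True # False # \<gamma>) \<noteq> 0)"
    and "interpolatory_cube k P"
  shows "interpolatory_cube (k - 1) (contractQ P)"
  unfolding interpolatory_cube_def
proof (intro allI impI)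
  fix lam rho :: "real list" and S :: "nat set"
  assume A: "length lam = k - 1 \<and> length rho = k - 1 \<and> (\<forall>a\<in>set lam. 0 < a) \<and>
         (\<forall>a\<in>set rho. 0 < a) \<and> S \<subseteq> {0..<k - 1}"
  obtain l ls where lam: "lam = l # ls" using A assms(1) by (cases lam) auto
  obtain r rs where rho: "rho = r # rs" using A assms(1) by (cases rho) auto
  have l: "l > 0" and r: "r > 0" using A lam rho by auto
  have lens: "length ls = k - 2" "length rs = k - 2" using A lam rho by auto
  have pos: "\<forall>a\<in>set ls. 0 < a" "\<forall>a\<in>set rs. 0 < a" using A lam rho by auto
  have finS: "finite S" using A finite_subset by blast
  define S' where "S' = {i. Suc i \<in> S}"
  have S'sub: "S' \<subseteq> {0..<k-2}" using A unfolding S'_def by auto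
  have finS': "finite S'" using S'sub finite_subset by blast
  define pf where "pf = (\<lambda>b c. interp ls rs (flipS S' (slice (slice P b) c)))"
  let ?Q = "contractQ P"
  have sQF: "slice ?Q False = (\<lambda>\<beta>. slice (slice P False) False \<beta> + [:0,1:] * slice (slice P True) True \<beta>)"
    by (simp add: slice_def fun_eq_iff)
  have sQT: "slice ?Q True = (\<lambda>\<beta>. slice (slice P False) True \<beta> + slice (slice P True) False \<beta>)"
    by (simp add: slice_def fun_eq_iff)
  have q0: "interp ls rs (flipS S' (slice ?Q False)) = pf False False + [:0,1:] * pf True True"
    unfolding sQF pf_def by (simp add: flipS_plus[OF finS'] flipS_X[OF finS'] interp_plus interp_X)
  have q1: "interp ls rs (flipS S' (slice ?Q True)) = pf False True + pf True False"
    unfolding sQT pf_def by (simp add: flipS_plus[OF finS'] interp_plus)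
  have eqQ: "interp lam rho (flipS S ?Q) = g2 (0 \<in> S) l r (pf False False + [:0,1:] * pf True True) (pf False True + pf True False)"
    unfolding lam rho interp_flipS_g2[OF finS] S'_def[symmetric] q0 q1 ..
  have H: "NN (g2 e1 l1 r1 (g2 e2 l2 r2 (pf False False) (pf False True)) (g2 e2 l2 r2 (pf True False) (pf True True)))"
    if "l1 > 0" "r1 > 0" "l2 > 0" "r2 > 0" for e1 e2 l1 r1 l2 r2
  proof -
    define SP where "SP = {i. (i = 0 \<and> e1) \<or> (i = 1 \<and> e2) \<or> (i \<ge> 2 \<and> i - 2 \<in> S')}"
    define S1 where "S1 = {i. (i = 0 \<and> e2) \<or> (i \<ge> 1 \<and> i - 1 \<in> S')}"
    have SPsub: "SP \<subseteq> {0..<k}" using S'sub assms(1) unfolding SP_def by auto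
    have finSP: "finite SP" using SPsub finite_subset by blast
    have S1sub: "S1 \<subseteq> {0..<k}" using S'sub assms(1) unfolding S1_def by auto
    have finS1: "finite S1" using S1sub finite_subset by blast
    have e1: "{i. Suc i \<in> SP} = S1" unfolding SP_def S1_def by auto
    have e2: "{i. Suc i \<in> S1} = S'" unfolding S1_def by auto
    have z1: "(0 \<in> SP) = e1" unfolding SP_def by auto
    have z2: "(0 \<in> S1) = e2" unfolding S1_def by auto
    have "interp (l1 # l2 # ls) (r1 # r2 # rs) (flipS SP P) =
       g2 e1 l1 r1 (g2 e2 l2 r2 (pf False False) (pf False True)) (g2 e2 l2 r2 (pf True False) (pf True True))"
      unfolding interp_flipS_g2[OF finSP] e1 z1 interp_flipS_g2[OF finS1] e2 z2 pf_def ..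
    moreover have "NN (interp (l1 # l2 # ls) (r1 # r2 # rs) (flipS SP P))"
      using assms(4) unfolding interpolatory_cube_def NN_def
      using lens pos that SPsub assms(1) by (auto simp del: interp.simps)
    ultimately show ?thesis by simp
  qed
  have "NN (interp lam rho (flipS S ?Q))"
    unfolding eqQ by (rule face_lemma[OF H l r])
  then show "standard (interp lam rho (flipS S ?Q)) \<and> nonpos_zeros (interp lam rho (flipS S ?Q))"
    by (simp add: NN_def)
qed

end
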